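(* Under Assumption 1, for every bounded continuous $f:\mathcal P(\mathbb R^d)\to\mathbb R$ the function $$Pf(\pi,Q)=\int f(\pi')\,P(d\pi'\mid\pi,Q)=\sum_{m=1}^M f\big(\hat\pi(m,\pi,Q)\big)\,\pi(Q^{-1}(m))$$ is continuous on $\mathcal S\times\mathcal Q_c$; i.e., the belief transition kernel is weak-Feller on $\mathcal S\times\mathcal Q_c$.
   Context: Assumption 1: the source is $x_{t+1}=f(x_t,w_t)$ with Borel $f$, $\{w_t\}$ i.i.d. and independent of $x_0$; for each $x$ the law of $f(x,w_0)$ has a density $\phi(\cdot|x)$ which is strictly positive everywhere, bounded by $C$ and $C_1$-Lipschitz, uniformly in $x$. $\mathcal P(\mathbb R^d)$ has the weak topology. $\mathcal S$: probability measures on $\mathbb R^d$ with density bounded by $C$ and $C_1$-Lipschitz. $\mathcal Q_c$: Borel maps $Q:\mathbb R^d\to\{1,\dots,M\}$ with all cells convex, topologized by: fix $P$ with strictly positive density, identify $Q,Q'$ if $PQ=PQ'$, and $Q_n\to Q$ iff $PQ_n\to PQ$ weakly, where $PQ(A\times\{i\})=P(A\cap Q^{-1}(i))$. $P(d\pi'\mid\pi,Q)$ is the law of the next belief $\pi_{t+1}=\hat\pi(q_t,\pi,Q)$ given $\pi_t=\pi$, $Q_t=Q$, where $P(q_t=m\mid\pi,Q)=\pi(Q^{-1}(m))$ and $\hat\pi(m,\pi,Q)$ has density $z\mapsto\pi(Q^{-1}(m))^{-1}\int_{Q^{-1}(m)}\phi(z|x)\pi(dx)$ (terms with $\pi(Q^{-1}(m))=0$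 contribute zero). *)

theory Defs
  imports "HOL-Probability.Probability"
begin

definition weak_conv_seq :: "(nat \<Rightarrow> 'b::topological_space measure) \<Rightarrow> 'b measure \<Rightarrow> bool" where
  "weak_conv_seq \<mu>s \<mu> \<longleftrightarrow>
     (\<forall>g :: 'b \<Rightarrow> real. continuous_on UNIV g \<and> bounded (range g) \<longrightarrow>
        (\<lambda>n. \<integral>x. g x \<partial>(\<mu>s n)) \<longlonglongrightarrow> (\<integral>x. g x \<partial>\<mu>))"

definition prob_borel :: "'a::topological_space measure \<Rightarrow> bool" where
  "prob_borel \<mu> \<longleftrightarrow> prob_space \<mu> \<and> sets \<mu> = sets borel"

definition in_S :: "real \<Rightarrow> real \<Rightarrow> 'a::euclidean_space measure \<Rightarrow> bool" where
  "in_S C C1 \<pi> \<longleftrightarrow> prob_space \<pi> \<and>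
     (\<exists>g. g \<in> borel_measurable borel \<and> (\<forall>x. 0 \<le> g x \<and> g x \<le> C) \<and>
          C1-lipschitz_on UNIV g \<and> \<pi> = density lborel (\<lambda>x. ennreal (g x)))"

definition in_Qc :: "nat \<Rightarrow> ('a::euclidean_space \<Rightarrow> nat) \<Rightarrow> bool" where
  "in_Qc M Q \<longleftrightarrow> Q \<in> borel_measurable borel \<and> (\<forall>x. Q x \<in> {1..M}) \<and>
     (\<forall>i. convex (Q -` {i}))"

text \<open>The joint measure PQ on R^d x nat: PQ(A x {i}) = P(A \<inter> Q^{-1}(i)).\<close>
definition joint_PQ :: "'a::euclidean_space measure \<Rightarrow> ('a \<Rightarrow> nat) \<Rightarrow> ('a \<times> nat) measure" where
  "joint_PQ P Q = distr P borel (\<lambda>x. (x, Q x))"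

text \<open>Belief update: density z \<mapsto> \<pi>(Q^{-1} m)^{-1} \<integral>_{Q^{-1} m} \<phi>(z|x) \<pi>(dx);
  here \<open>\<phi> x z\<close> stands for \<phi>(z|x).\<close>
definition belief_update ::
  "('a::euclidean_space \<Rightarrow> 'a \<Rightarrow> real) \<Rightarrow> nat \<Rightarrow> 'a measure \<Rightarrow> ('a \<Rightarrow> nat) \<Rightarrow> 'a measure" where
  "belief_update \<phi> m \<pi> Q =
     density lborel (\<lambda>z. ennreal (inverse (measure \<pi> (Q -` {m})) *
                                  (\<integral>x\<in>Q -` {m}. \<phi> x z \<partial>\<pi>)))"

definition Pf ::
  "('a::euclidean_space measure \<Rightarrow> real) \<Rightarrow> ('a \<Rightarrow> 'a \<Rightarrow> real) \<Rightarrow> nat \<Rightarrow> 'a measure \<Rightarrow> ('a \<Rightarrow> nat) \<Rightarrow> real" where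
  "Pf f \<phi> M \<pi> Q =
     (\<Sum>m\<in>{1..M}. if measure \<pi> (Q -` {m}) = 0 then 0
                   else f (belief_update \<phi> m \<pi> Q) * measure \<pi> (Q -` {m}))"

end

theory Submission
  imports Defs
begin



definition bump :: "'a::euclidean_space \<Rightarrow> real \<Rightarrow> 'a \<Rightarrow> real" where
  "bump z r y = max 0 (r - dist y z)"

lemma bump_cont: "continuous_on UNIV (bump z r)"
  unfolding bump_def by (intro continuous_intros)

lemma bump_meas[measurable]: "bump z r \<in> borel_measurable borel"
  using bump_cont borel_measurable_continuous_onI by blast

lemma bump_nonneg: "0 \<le> bump z r y" by (simp add: bump_def)
lemma bump_le: "bump z r y \<le> max 0 r" unfolding bump_def max_def by (smt (verit) zero_le_dist)
lemma bump_zero: "r \<le> dist y z \<Longrightarrow> bump z r y = 0" by (simp add: bump_def)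

lemma bump_le_ind: "bump z r y \<le> max 0 r * indicator (cball z r) y"
  by (auto simp: bump_def indicator_def dist_commute split: split_max) (metis order_trans zero_le_dist)

lemma bump_integrable: "integrable lborel (bump z r)"
proof (rule Bochner_Integration.integrable_bound[where f="\<lambda>y. max 0 r * indicator (cball z r) y"])
  show "integrable lborel (\<lambda>y. max 0 r * indicator (cball z r) y)"
    by (intro integrable_mult_right integrable_real_indicator) (use emeasure_bounded_finite[OF bounded_cball, of z r] in auto)
  show "AE x in lborel. norm (bump z r x) \<le> norm (max 0 r * indicator (cball z r) x)"
    by (intro AE_I2) (simp add: abs_of_nonneg bump_nonneg bump_le_ind)
qed simp

lemma bump_int_pos: assumes "r > 0" shows "0 < (\<integral>y. bump z r y \<partial>lborel)"
proof -
  have "(\<integral>y. (r/2) * indicator (ball z (r/2)) y \<partial>lborel) \<le> (\<integral>y. bump z r y \<partial>lborel)"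
  proof (rule integral_mono)
    show "integrable lborel (\<lambda>y. (r/2) * indicator (ball z (r/2)) y)"
      by (intro integrable_mult_right integrable_real_indicator) (use emeasure_bounded_finite[OF bounded_ball, of z "r/2"] in auto)
  qed (use assms in \<open>auto simp: bump_integrable[of z r, unfolded bump_def] bump_def indicator_def dist_commute\<close>)
  moreover have "(\<integral>y. (r/2) * indicator (ball z (r/2)) y \<partial>lborel) > 0"
    using assms content_ball_pos[of "r/2" z] by simp
  ultimately show ?thesis by linarith
qed

lemma bump_approx:
  fixes g :: "'a::euclidean_space \<Rightarrow> real"
  assumes gm: "g \<in> borel_measurable borel" and gb: "\<And>y. \<bar>g y\<bar> \<le> K"
    and gl: "L-lipschitz_on UNIV g" and r: "r > 0"
  shows "integrable lborel (\<lambda>y. g y * bump z r y)"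
    and "\<bar>(\<integral>y. g y * bump z r y \<partial>lborel) - g z * (\<integral>y. bump z r y \<partial>lborel)\<bar>
            \<le> L * r * (\<integral>y. bump z r y \<partial>lborel)"
proof -
  show int: "integrable lborel (\<lambda>y. g y * bump z r y)"
  proof (rule Bochner_Integration.integrable_bound[where f="\<lambda>y. K * bump z r y"])
    show "integrable lborel (\<lambda>y. K * bump z r y)" by (intro integrable_mult_right bump_integrable)
    show "AE x in lborel. norm (g x * bump z r x) \<le> norm (K * bump z r x)"
      using gb bump_nonneg by (auto simp: abs_mult intro!: mult_right_mono AE_I2 order.trans[OF _ abs_ge_self])
  qed (use gm in simp)
  have "(\<integral>y. g y * bump z r y \<partial>lborel) - g z * (\<integral>y. bump z r y \<partial>lborel)
      = (\<integral>y. (g y - g z) * bump z r y \<partial>lborel)"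
    using int bump_integrable[of z r] by (simp add: algebra_simps)
  also have "\<bar>\<dots>\<bar> \<le> (\<integral>y. \<bar>(g y - g z) * bump z r y\<bar> \<partial>lborel)"
    by (rule integral_abs_bound)
  also have "\<dots> \<le> (\<integral>y. L * r * bump z r y \<partial>lborel)"
  proof (rule integral_mono)
    show "integrable lborel (\<lambda>y. L * r * bump z r y)" by (intro integrable_mult_right bump_integrable)
    show "integrable lborel (\<lambda>y. \<bar>(g y - g z) * bump z r y\<bar>)"
      using int bump_integrable[of z r] by (intro integrable_abs) (simp add: algebra_simps)
    fix y
    show "\<bar>(g y - g z) * bump z r y\<bar> \<le> L * r * bump z r y"
    proof (cases "dist y z < r")
      case True
      have "\<bar>g y - g z\<bar> \<le> L * dist y z" using gl by (simp add: lipschitz_on_def dist_real_def)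
      also have "\<dots> \<le> L * r" using True lipschitz_on_nonneg[OF gl] by (intro mult_left_mono) auto
      finally show ?thesis using bump_nonneg[of z r y] by (simp add: abs_mult mult_right_mono)
    next
      case False then show ?thesis by (simp add: bump_zero)
    qed
  qed
  also have "\<dots> = L * r * (\<integral>y. bump z r y \<partial>lborel)" by simp
  finally show "\<bar>(\<integral>y. g y * bump z r y \<partial>lborel) - g z * (\<integral>y. bump z r y \<partial>lborel)\<bar>
            \<le> L * r * (\<integral>y. bump z r y \<partial>lborel)" .
qed




lemma null_by_approx:
  fixes x :: "nat \<Rightarrow> real" and y :: "nat \<Rightarrow> nat \<Rightarrow> real"
  assumes "\<And>n. 0 \<le> x n" "\<And>k n. x n \<le> y k n" "\<And>k. (\<lambda>n. y k n) \<longlonglongrightarrow> c k" "c \<longlonglongrightarrow> 0"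
  shows "x \<longlonglongrightarrow> 0"
proof (rule LIMSEQ_I)
  fix e :: real assume e: "0 < e"
  obtain k0 where k0: "\<And>k. k \<ge> k0 \<Longrightarrow> norm (c k - 0) < e/2"
    using LIMSEQ_D[OF assms(4), of "e/2"] e by auto
  obtain n0 where n0: "\<And>n. n \<ge> n0 \<Longrightarrow> norm (y k0 n - c k0) < e/2"
    using LIMSEQ_D[OF assms(3)[of k0], of "e/2"] e by auto
  have "norm (x n - 0) < e" if "n \<ge> n0" for n
  proof -
    have a: "\<bar>c k0\<bar> < e/2" using k0[of k0] by simp
    have b: "\<bar>y k0 n - c k0\<bar> < e/2" using n0[OF that] by simp
    show ?thesis using a b assms(1)[of n] assms(2)[of n k0] by simp (smt (verit))
  qed
  then show "\<exists>no. \<forall>n\<ge>no. norm (x n - 0) < e" by blast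
qed

lemma scheffe:
  fixes gs :: "nat \<Rightarrow> 'a \<Rightarrow> real"
  assumes gsm: "\<And>n. gs n \<in> borel_measurable M" and gm: "g \<in> borel_measurable M"
    and gsn: "\<And>n x. 0 \<le> gs n x" and gn: "\<And>x. 0 \<le> g x"
    and gsi: "\<And>n. integrable M (gs n)" and gi: "integrable M g"
    and eq: "\<And>n. integral\<^sup>L M (gs n) = integral\<^sup>L M g"
    and lim: "\<And>x. (\<lambda>n. gs n x) \<longlonglongrightarrow> g x"
  shows "(\<lambda>n. \<integral>x. \<bar>gs n x - g x\<bar> \<partial>M) \<longlonglongrightarrow> 0"
proof -
  have i2: "integrable M (\<lambda>x. max 0 (g x - gs n x))" for n
    using gsi[of n] gi by (intro integrable_max Bochner_Integration.integrable_diff) auto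
  have eqn: "(\<integral>x. \<bar>gs n x - g x\<bar> \<partial>M) = 2 * (\<integral>x. max 0 (g x - gs n x) \<partial>M)" for n
  proof -
    have "(\<integral>x. \<bar>gs n x - g x\<bar> \<partial>M) = (\<integral>x. (gs n x - g x) + 2 * max 0 (g x - gs n x) \<partial>M)"
      by (intro Bochner_Integration.integral_cong) (auto split: split_max)
    also have "\<dots> = (\<integral>x. (gs n x - g x) \<partial>M) + 2 * (\<integral>x. max 0 (g x - gs n x) \<partial>M)"
      using i2[of n] gsi[of n] gi by simp
    also have "(\<integral>x. (gs n x - g x) \<partial>M) = 0" using gsi[of n] gi eq[of n] by simp
    finally show ?thesis by simp
  qed
  have "(\<lambda>n. \<integral>x. max 0 (g x - gs n x) \<partial>M) \<longlonglongrightarrow> (\<integral>x. 0 \<partial>M)"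
  proof (rule integral_dominated_convergence[where w=g])
    show "AE x in M. (\<lambda>n. max 0 (g x - gs n x)) \<longlonglongrightarrow> 0"
    proof (intro AE_I2)
      fix x
      have "(\<lambda>n. max 0 (g x - gs n x)) \<longlonglongrightarrow> max 0 (g x - g x)"
        by (intro tendsto_intros lim)
      then show "(\<lambda>n. max 0 (g x - gs n x)) \<longlonglongrightarrow> 0" by simp
    qed
    show "AE x in M. norm (max 0 (g x - gs n x)) \<le> g x" for n
      using gn gsn by (intro AE_I2) (auto split: split_max)
  qed (use gsm gm gi in auto)
  then have "(\<lambda>n. 2 * (\<integral>x. max 0 (g x - gs n x) \<partial>M)) \<longlonglongrightarrow> 2 * 0"
    by (intro tendsto_intros) simp
  then show ?thesis unfolding eqn by simp
qed

lemma dens_pointwise: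
  fixes gs :: "nat \<Rightarrow> 'a::euclidean_space \<Rightarrow> real" and g :: "'a \<Rightarrow> real"
  assumes gsm: "\<And>n. gs n \<in> borel_measurable borel" and gsb: "\<And>n y. 0 \<le> gs n y \<and> gs n y \<le> K"
    and gsl: "\<And>n. L-lipschitz_on UNIV (gs n)"
    and gm: "g \<in> borel_measurable borel" and gb: "\<And>y. 0 \<le> g y \<and> g y \<le> K"
    and gl: "L-lipschitz_on UNIV g"
    and conv: "weak_conv_seq (\<lambda>n. density lborel (\<lambda>x. ennreal (gs n x))) (density lborel (\<lambda>x. ennreal (g x)))"
  shows "(\<lambda>n. gs n z) \<longlonglongrightarrow> g z"
proof (rule LIMSEQ_I)
  fix e :: real assume e: "0 < e"
  have L: "0 \<le> L" using lipschitz_on_nonneg[OF gl] .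
  define r where "r = e / (4 * (L + 1))"
  have r: "r > 0" using e L by (simp add: r_def)
  have Lr: "2 * L * r < e / 2"
  proof -
    have "2 * L * r = e / 2 * (L / (L + 1))" using L by (simp add: r_def field_simps)
    also have "\<dots> < e / 2 * 1" using e L by (intro mult_strict_left_mono) auto
    finally show ?thesis by simp
  qed
  define I where "I = (\<integral>y. bump z r y \<partial>lborel)"
  have I: "I > 0" unfolding I_def using bump_int_pos[OF r] .
  have dens: "(\<integral>y. bump z r y \<partial>density lborel (\<lambda>x. ennreal (h x))) = (\<integral>y. h y * bump z r y \<partial>lborel)"
    if "h \<in> borel_measurable borel" "\<And>y. 0 \<le> h y" for h
    using that by (subst integral_density) auto
  have bd: "bounded (range (bump z r))"
    unfolding bounded_real using bump_nonneg bump_le by (metis abs_of_nonneg rangeE)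
  have "(\<lambda>n. \<integral>y. bump z r y \<partial>density lborel (\<lambda>x. ennreal (gs n x)))
        \<longlonglongrightarrow> (\<integral>y. bump z r y \<partial>density lborel (\<lambda>x. ennreal (g x)))"
    using conv bump_cont bd unfolding weak_conv_seq_def by blast
  then have cX: "(\<lambda>n. \<integral>y. gs n y * bump z r y \<partial>lborel) \<longlonglongrightarrow> (\<integral>y. g y * bump z r y \<partial>lborel)"
    using dens gsm gsb gm gb by simp
  obtain n0 where n0: "\<And>n. n \<ge> n0 \<Longrightarrow>
      norm ((\<integral>y. gs n y * bump z r y \<partial>lborel) - (\<integral>y. g y * bump z r y \<partial>lborel)) < e * I / 2"
    using LIMSEQ_D[OF cX, of "e * I / 2"] e I by auto
  have "norm (gs n z - g z) < e" if n: "n \<ge> n0" for n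
  proof -
    have a1: "\<bar>(\<integral>y. gs n y * bump z r y \<partial>lborel) - gs n z * I\<bar> \<le> L * r * I"
      unfolding I_def by (rule bump_approx(2)[OF gsm _ gsl r, where K=K]) (use gsb in \<open>auto simp: abs_le_iff\<close>)
    have a2: "\<bar>(\<integral>y. g y * bump z r y \<partial>lborel) - g z * I\<bar> \<le> L * r * I"
      unfolding I_def by (rule bump_approx(2)[OF gm _ gl r, where K=K]) (use gb in \<open>auto simp: abs_le_iff\<close>)
    have "\<bar>gs n z - g z\<bar> * I = \<bar>gs n z * I - g z * I\<bar>" using I by (simp add: abs_mult_pos left_diff_distrib[symmetric])
    also have "\<dots> \<le> 2 * L * r * I + \<bar>(\<integral>y. gs n y * bump z r y \<partial>lborel) - (\<integral>y. g y * bump z r y \<partial>lborel)\<bar>"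
      using a1 a2 by linarith
    also have "\<dots> < e / 2 * I + e * I / 2"
      using n0[OF n] mult_strict_right_mono[OF Lr I] by (simp add: algebra_simps)
    finally have "\<bar>gs n z - g z\<bar> * I < e * I" by (simp add: mult.commute)
    then show ?thesis using I by simp
  qed
  then show "\<exists>no. \<forall>n\<ge>no. norm (gs n z - g z) < e" by blast
qed




definition hk :: "'a::euclidean_space set \<Rightarrow> nat \<Rightarrow> 'a \<Rightarrow> real" where
  "hk U k x = (if U = UNIV then 1 else min 1 (real k * infdist x (- U)))"

lemma hk_cont: "continuous_on UNIV (hk U k)"
  unfolding hk_def by (cases "U = UNIV") (auto intro!: continuous_intros)

lemma hk_meas[measurable]: "hk U k \<in> borel_measurable borel"
  using hk_cont borel_measurable_continuous_onI by blast

lemma hk_bounds: "0 \<le> hk U k x" "hk U k x \<le> 1"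
  unfolding hk_def by (auto simp: infdist_nonneg)

lemma hk_out: "open U \<Longrightarrow> x \<notin> U \<Longrightarrow> hk U k x = 0"
  unfolding hk_def by (auto simp: infdist_zero)

lemma hk_lim: assumes "open U" "x \<in> U" shows "(\<lambda>k. hk U k x) \<longlonglongrightarrow> 1"
proof (cases "U = UNIV")
  case True then show ?thesis by (simp add: hk_def)
next
  case False
  then have ne: "- U \<noteq> {}" by auto
  have cl: "closed (- U)" using assms(1) by auto
  have "infdist x (- U) \<noteq> 0" using in_closed_iff_infdist_zero[OF cl ne, of x] assms(2) by auto
  then have d: "infdist x (- U) > 0" using infdist_nonneg[of x "-U"] by linarith
  obtain n :: nat where n: "1 / infdist x (- U) < real n" using reals_Archimedean2 by blast
  have "eventually (\<lambda>k. hk U k x = 1) sequentially"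
    unfolding eventually_sequentially
  proof (intro exI allI impI)
    fix k assume "n \<le> k"
    then have "1 / infdist x (- U) < real k" using n by linarith
    then have "1 < real k * infdist x (- U)" using d by (simp add: field_simps)
    then show "hk U k x = 1" using False by (simp add: hk_def)
  qed
  then show ?thesis by (rule tendsto_eventually)
qed

lemma convex_frontier_null:
  fixes A :: "'a::euclidean_space set"
  assumes "convex A"
  shows "AE x in lborel. x \<notin> frontier A"
proof -
  have "frontier A \<in> null_sets lebesgue"
    using negligible_convex_frontier[OF assms] negligible_iff_null_sets by blast
  moreover have "frontier A \<in> sets lborel" by (simp add: frontier_closed borel_closed)
  ultimately have "frontier A \<in> null_sets lborel"
    using null_sets_completion_iff by blast
  then show ?thesis using AE_not_in by blast
qed

lemma cell_conv:
  fixes p :: "'a::euclidean_space \<Rightarrow> real" and As :: "nat \<Rightarrow> 'a set"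
  assumes pm[measurable]: "p \<in> borel_measurable borel" and pp: "\<And>x. 0 \<le> p x"
    and pint: "integrable lborel p"
    and Asm[measurable]: "\<And>n. As n \<in> sets borel" and Am[measurable]: "A \<in> sets borel" and Acv: "convex A"
    and conv: "\<And>u. continuous_on UNIV u \<Longrightarrow> (\<And>x. \<bar>u x\<bar> \<le> 1) \<Longrightarrow>
       (\<lambda>n. \<integral>x. p x * (indicator (As n) x * u x) \<partial>lborel) \<longlonglongrightarrow> (\<integral>x. p x * (indicator A x * u x) \<partial>lborel)"
  shows "(\<lambda>n. \<integral>x. p x * \<bar>indicator (As n) x - indicator A x\<bar> \<partial>lborel) \<longlonglongrightarrow> 0"
proof -
  define U where "U = interior A"
  have oU: "open U" by (simp add: U_def)
  have UA: "U \<subseteq> A" by (simp add: U_def interior_subset)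
  define u where "u k x = 1 - 2 * hk U k x" for k x
  have ucont: "continuous_on UNIV (u k)" for k
    unfolding u_def by (intro continuous_on_diff continuous_on_const continuous_on_mult hk_cont)
  have ub: "\<bar>u k x\<bar> \<le> 1" for k x using hk_bounds[of U k x] by (auto simp: u_def)
  have um[measurable]: "u k \<in> borel_measurable borel" for k unfolding u_def by measurable
  have intb: "integrable lborel (\<lambda>x. p x * (indicator B x * v x))"
    if [measurable]: "B \<in> sets borel" "v \<in> borel_measurable borel" and vb: "\<And>x. \<bar>v x\<bar> \<le> 1" for B v
  proof (rule Bochner_Integration.integrable_bound[where f=p])
    show "AE x in lborel. norm (p x * (indicator B x * v x)) \<le> norm (p x)"
    proof (intro AE_I2)
      fix x
      have "\<bar>indicator B x * v x\<bar> \<le> 1" using vb[of x] by (auto simp: indicator_def)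
      then show "norm (p x * (indicator B x * v x)) \<le> norm (p x)"
        using pp[of x] by (simp add: abs_mult mult_left_le)
    qed
  qed (use pint in auto)
  have intA: "integrable lborel (\<lambda>x. p x * indicator A x)"
    using intb[of A "\<lambda>_. 1"] by simp
  define y where "y k n = (\<integral>x. p x * (indicator (As n) x * u k x) \<partial>lborel) + (\<integral>x. p x * indicator A x \<partial>lborel)" for k n
  define c where "c k = (\<integral>x. p x * (indicator A x * u k x) \<partial>lborel) + (\<integral>x. p x * indicator A x \<partial>lborel)" for k
  show ?thesis
  proof (rule null_by_approx[where y=y and c=c])
    show "0 \<le> (\<integral>x. p x * \<bar>indicator (As n) x - indicator A x\<bar> \<partial>lborel)" for n
      using pp by (intro integral_nonneg_AE AE_I2) simp
    show "(\<integral>x. p x * \<bar>indicator (As n) x - indicator A x\<bar> \<partial>lborel) \<le> y k n" for k n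
    proof -
      have "(\<integral>x. p x * \<bar>indicator (As n) x - indicator A x\<bar> \<partial>lborel)
          \<le> (\<integral>x. p x * (indicator (As n) x * u k x) + p x * indicator A x \<partial>lborel)"
      proof (rule integral_mono)
        show "integrable lborel (\<lambda>x. p x * \<bar>indicator (As n) x - indicator A x\<bar>)"
        proof (rule Bochner_Integration.integrable_bound[where f="\<lambda>x. p x * indicator (As n) x + p x * indicator A x"])
          show "AE x in lborel. norm (p x * \<bar>indicator (As n) x - indicator A x\<bar>) \<le> norm (p x * indicator (As n) x + p x * indicator A x)"
          proof (intro AE_I2)
            fix x show "norm (p x * \<bar>indicator (As n) x - indicator A x\<bar>) \<le> norm (p x * indicator (As n) x + p x * indicator A x)"
              using pp[of x] by (cases "x \<in> As n"; cases "x \<in> A") (simp_all add: abs_mult)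
          qed
        qed (use intb[of "As n" "\<lambda>_. 1"] intA in simp_all)
        show "integrable lborel (\<lambda>x. p x * (indicator (As n) x * u k x) + p x * indicator A x)"
          using intb[of "As n" "u k"] intA ub by auto
        fix x
        have h0: "x \<notin> A \<Longrightarrow> hk U k x = 0" using hk_out[OF oU] UA by auto
        have "\<bar>indicator (As n) x - indicator A x\<bar> \<le> indicator (As n) x * u k x + (indicator A x :: real)"
          using h0 hk_bounds[of U k x] by (auto simp: u_def indicator_def)
        then show "p x * \<bar>indicator (As n) x - indicator A x\<bar> \<le> p x * (indicator (As n) x * u k x) + p x * indicator A x"
          using pp[of x] by (metis distrib_left mult_left_mono)
      qed
      also have "\<dots> = y k n" unfolding y_def using intb[of "As n" "u k"] intA ub by simp
      finally show ?thesis .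
    qed
    show "(\<lambda>n. y k n) \<longlonglongrightarrow> c k" for k
      unfolding y_def c_def by (intro tendsto_intros conv ucont ub)
    show "c \<longlonglongrightarrow> 0"
    proof -
      have "(\<lambda>k. \<integral>x. p x * (indicator A x * u k x) \<partial>lborel)
            \<longlonglongrightarrow> (\<integral>x. p x * (indicator A x * (1 - 2 * indicator U x)) \<partial>lborel)"
      proof (rule integral_dominated_convergence[where w=p])
        show "AE x in lborel. (\<lambda>k. p x * (indicator A x * u k x)) \<longlonglongrightarrow> p x * (indicator A x * (1 - 2 * indicator U x))"
        proof (intro AE_I2)
          fix x
          have "(\<lambda>k. u k x) \<longlonglongrightarrow> 1 - 2 * indicator U x"
          proof (cases "x \<in> U")
            case True
            have "(\<lambda>k. 1 - 2 * hk U k x) \<longlonglongrightarrow> 1 - 2 * 1"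
              by (intro tendsto_intros hk_lim[OF oU True])
            then show ?thesis unfolding u_def using True by simp
          next
            case False
            then show ?thesis unfolding u_def using hk_out[OF oU False] by simp
          qed
          then show "(\<lambda>k. p x * (indicator A x * u k x)) \<longlonglongrightarrow> p x * (indicator A x * (1 - 2 * indicator U x))"
            by (intro tendsto_intros)
        qed
        show "AE x in lborel. norm (p x * (indicator A x * u k x)) \<le> p x" for k
        proof (intro AE_I2)
          fix x
          have "\<bar>indicator A x * u k x\<bar> \<le> 1" using ub[of k x] by (auto simp: indicator_def)
          then show "norm (p x * (indicator A x * u k x)) \<le> p x"
            using pp[of x] by (simp add: abs_mult mult_left_le)
        qed
      qed (use pint oU in auto)
      also have "(\<integral>x. p x * (indicator A x * (1 - 2 * indicator U x)) \<partial>lborel) = (\<integral>x. - (p x * indicator A x) \<partial>lborel)"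
      proof (rule integral_cong_AE)
        show "AE x in lborel. p x * (indicator A x * (1 - 2 * indicator U x)) = - (p x * indicator A x)"
          using convex_frontier_null[OF Acv]
        proof eventually_elim
          fix x assume "x \<notin> frontier A"
          then have "x \<in> A \<Longrightarrow> x \<in> U" unfolding U_def frontier_def using closure_subset by auto
          then show "p x * (indicator A x * (1 - 2 * indicator U x)) = - (p x * indicator A x)"
            by (auto simp: indicator_def)
        qed
      qed (use oU in auto)
      finally have "(\<lambda>k. \<integral>x. p x * (indicator A x * u k x) \<partial>lborel) \<longlonglongrightarrow> - (\<integral>x. p x * indicator A x \<partial>lborel)"
        by simp
      then have "c \<longlonglongrightarrow> - (\<integral>x. p x * indicator A x \<partial>lborel) + (\<integral>x. p x * indicator A x \<partial>lborel)"
        unfolding c_def by (intro tendsto_intros)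
      then show ?thesis by simp
    qed
  qed
qed




lemma cell_conv_g:
  fixes p g :: "'a::euclidean_space \<Rightarrow> real" and As :: "nat \<Rightarrow> 'a set"
  assumes pm[measurable]: "p \<in> borel_measurable borel" and pp: "\<And>x. 0 < p x"
    and pint: "integrable lborel p"
    and gm[measurable]: "g \<in> borel_measurable borel" and gb: "\<And>x. 0 \<le> g x \<and> g x \<le> K"
    and gint: "integrable lborel g"
    and Asm[measurable]: "\<And>n. As n \<in> sets borel" and Am[measurable]: "A \<in> sets borel"
    and E: "(\<lambda>n. \<integral>x. p x * \<bar>indicator (As n) x - indicator A x\<bar> \<partial>lborel) \<longlonglongrightarrow> 0"
  shows "(\<lambda>n. \<integral>x. g x * \<bar>indicator (As n) x - indicator A x\<bar> \<partial>lborel) \<longlonglongrightarrow> 0"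
proof -
  have K: "0 \<le> K" using gb[of 0] by linarith
  have intd: "integrable lborel (\<lambda>x. f x * \<bar>indicator (As n) x - indicator A x\<bar>)"
    if "integrable lborel f" "f \<in> borel_measurable borel" for f :: "'a \<Rightarrow> real" and n
  proof (rule Bochner_Integration.integrable_bound[where f=f])
    show "AE x in lborel. norm (f x * \<bar>indicator (As n) x - indicator A x\<bar>) \<le> norm (f x)"
      by (intro AE_I2) (auto simp: indicator_def abs_mult)
  qed (use that in simp_all)
  define S where "S k = {x. p x < 1 / (real k + 1)}" for k
  have Sm[measurable]: "S k \<in> sets borel" for k unfolding S_def by measurable
  have intS: "integrable lborel (\<lambda>x. g x * indicator (S k) x)" for k
    using integrable_mult_indicator[of "S k" lborel g] gint by (simp add: mult.commute)
  define y where "y k n = K * (real k + 1) * (\<integral>x. p x * \<bar>indicator (As n) x - indicator A x\<bar> \<partial>lborel)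
      + (\<integral>x. g x * indicator (S k) x \<partial>lborel)" for k n
  define c where "c k = (\<integral>x. g x * indicator (S k) x \<partial>lborel)" for k
  show ?thesis
  proof (rule null_by_approx[where y=y and c=c])
    show "0 \<le> (\<integral>x. g x * \<bar>indicator (As n) x - indicator A x\<bar> \<partial>lborel)" for n
      using gb by (intro integral_nonneg_AE AE_I2) simp
    show "(\<integral>x. g x * \<bar>indicator (As n) x - indicator A x\<bar> \<partial>lborel) \<le> y k n" for k n
    proof -
      have "(\<integral>x. g x * \<bar>indicator (As n) x - indicator A x\<bar> \<partial>lborel)
          \<le> (\<integral>x. K * (real k + 1) * (p x * \<bar>indicator (As n) x - indicator A x\<bar>) + g x * indicator (S k) x \<partial>lborel)"
      proof (rule integral_mono)
        show "integrable lborel (\<lambda>x. g x * \<bar>indicator (As n) x - indicator A x\<bar>)"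
          using intd gint by simp
        show "integrable lborel (\<lambda>x. K * (real k + 1) * (p x * \<bar>indicator (As n) x - indicator A x\<bar>) + g x * indicator (S k) x)"
          using intd[OF pint pm] intS by simp
        fix x
        let ?d = "\<bar>indicator (As n) x - indicator A x\<bar> :: real"
        have d: "0 \<le> ?d" "?d \<le> 1" by (auto simp: indicator_def)
        show "g x * ?d \<le> K * (real k + 1) * (p x * ?d) + g x * indicator (S k) x"
        proof (cases "x \<in> S k")
          case True
          have "g x * ?d \<le> g x" using gb[of x] d by (simp add: mult_left_le)
          moreover have "0 \<le> K * (real k + 1) * (p x * ?d)" using K pp[of x] d by simp
          ultimately show ?thesis using True by simp
        next
          case False
          then have "1 \<le> (real k + 1) * p x" by (simp add: S_def field_simps)
          then have "K * ?d * 1 \<le> K * ?d * ((real k + 1) * p x)"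
            using K d by (intro mult_left_mono) auto
          then have "K * ?d \<le> K * (real k + 1) * (p x * ?d)" by (simp add: algebra_simps)
          moreover have "g x * ?d \<le> K * ?d" using gb[of x] d by (intro mult_right_mono) auto
          ultimately show ?thesis using False by simp
        qed
      qed
      also have "\<dots> = y k n" unfolding y_def using intd[OF pint pm] intS by simp
      finally show ?thesis .
    qed
    show "(\<lambda>n. y k n) \<longlonglongrightarrow> c k" for k
    proof -
      have "(\<lambda>n. y k n) \<longlonglongrightarrow> K * (real k + 1) * 0 + c k"
        unfolding y_def c_def by (intro tendsto_intros E)
      then show ?thesis by simp
    qed
    show "c \<longlonglongrightarrow> 0"
    proof -
      have "(\<lambda>k. \<integral>x. g x * indicator (S k) x \<partial>lborel) \<longlonglongrightarrow> (\<integral>x. (0::real) \<partial>(lborel::'a measure))"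
      proof (rule integral_dominated_convergence[where w=g and s="\<lambda>k x. g x * indicator (S k) x" and f="\<lambda>x. 0"])
        show "AE x in lborel. (\<lambda>k. g x * indicator (S k) x) \<longlonglongrightarrow> 0"
        proof (intro AE_I2)
          fix x
          obtain N :: nat where N: "1 / p x < real N" using reals_Archimedean2 by blast
          have "eventually (\<lambda>k. g x * indicator (S k) x = 0) sequentially"
            unfolding eventually_sequentially
          proof (intro exI allI impI)
            fix k assume "N \<le> k"
            then have "1 / p x < real k + 1" using N by linarith
            then have "x \<notin> S k" using pp[of x] by (simp add: S_def field_simps)
            then show "g x * indicator (S k) x = 0" by simp
          qed
          then show "(\<lambda>k. g x * indicator (S k) x) \<longlonglongrightarrow> 0" by (rule tendsto_eventually)
        qed
        show "AE x in lborel. norm (g x * indicator (S k) x) \<le> g x" for k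
          using gb by (intro AE_I2) (auto simp: indicator_def)
      qed (use gint in simp_all)
      then show ?thesis unfolding c_def by simp
    qed
  qed
qed

lemma core:
  fixes gs :: "nat \<Rightarrow> 'a::euclidean_space \<Rightarrow> real" and g h :: "'a \<Rightarrow> real" and As :: "nat \<Rightarrow> 'a set"
  assumes gsm[measurable]: "\<And>n. gs n \<in> borel_measurable borel" and gm[measurable]: "g \<in> borel_measurable borel"
    and gsi: "\<And>n. integrable lborel (gs n)" and gi: "integrable lborel g"
    and gn: "\<And>x. 0 \<le> g x"
    and S: "(\<lambda>n. \<integral>x. \<bar>gs n x - g x\<bar> \<partial>lborel) \<longlonglongrightarrow> 0"
    and W: "(\<lambda>n. \<integral>x. g x * \<bar>indicator (As n) x - indicator A x\<bar> \<partial>lborel) \<longlonglongrightarrow> 0"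
    and hm[measurable]: "h \<in> borel_measurable borel" and hb: "\<And>x. \<bar>h x\<bar> \<le> K"
    and Asm[measurable]: "\<And>n. As n \<in> sets borel" and Am[measurable]: "A \<in> sets borel"
  shows "(\<lambda>n. \<integral>x. gs n x * (indicator (As n) x * h x) \<partial>lborel) \<longlonglongrightarrow> (\<integral>x. g x * (indicator A x * h x) \<partial>lborel)"
proof -
  have K: "0 \<le> K" using hb[of 0] by linarith
  have intb: "integrable lborel (\<lambda>x. f x * (indicator B x * h x))"
    if "integrable lborel f" "f \<in> borel_measurable borel" "B \<in> sets borel" for f B
  proof (rule Bochner_Integration.integrable_bound[where f="\<lambda>x. K * f x"])
    show "AE x in lborel. norm (f x * (indicator B x * h x)) \<le> norm (K * f x)"
    proof (intro AE_I2)
      fix x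
      have "\<bar>indicator B x * h x\<bar> \<le> K" using hb[of x] K by (auto simp: indicator_def)
      then have "\<bar>f x\<bar> * \<bar>indicator B x * h x\<bar> \<le> \<bar>f x\<bar> * K"
        by (intro mult_left_mono) auto
      then show "norm (f x * (indicator B x * h x)) \<le> norm (K * f x)"
        using K by (simp only: real_norm_def abs_mult abs_of_nonneg mult.commute)
    qed
  qed (use that in simp_all)
  have intd: "integrable lborel (\<lambda>x. g x * \<bar>indicator (As n) x - indicator A x\<bar>)" for n
  proof (rule Bochner_Integration.integrable_bound[where f=g])
    show "AE x in lborel. norm (g x * \<bar>indicator (As n) x - indicator A x\<bar>) \<le> norm (g x)"
      by (intro AE_I2) (auto simp: indicator_def abs_mult)
  qed (use gi in simp_all)
  have intg: "integrable lborel (\<lambda>x. \<bar>gs n x - g x\<bar>)" for n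
    using gsi gi by (intro integrable_abs Bochner_Integration.integrable_diff)
  have "(\<lambda>n. (\<integral>x. gs n x * (indicator (As n) x * h x) \<partial>lborel) - (\<integral>x. g x * (indicator A x * h x) \<partial>lborel)) \<longlonglongrightarrow> 0"
  proof (rule Lim_null_comparison)
    show "eventually (\<lambda>n. norm ((\<integral>x. gs n x * (indicator (As n) x * h x) \<partial>lborel) - (\<integral>x. g x * (indicator A x * h x) \<partial>lborel))
       \<le> K * ((\<integral>x. \<bar>gs n x - g x\<bar> \<partial>lborel) + (\<integral>x. g x * \<bar>indicator (As n) x - indicator A x\<bar> \<partial>lborel))) sequentially"
    proof (intro always_eventually allI)
      fix n
      have i1: "integrable lborel (\<lambda>x. gs n x * (indicator (As n) x * h x))" using intb[OF gsi gsm Asm] .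
      have i2: "integrable lborel (\<lambda>x. g x * (indicator A x * h x))" using intb[OF gi gm Am] .
      have "norm ((\<integral>x. gs n x * (indicator (As n) x * h x) \<partial>lborel) - (\<integral>x. g x * (indicator A x * h x) \<partial>lborel))
          = \<bar>\<integral>x. gs n x * (indicator (As n) x * h x) - g x * (indicator A x * h x) \<partial>lborel\<bar>"
        using i1 i2 by simp
      also have "\<dots> \<le> (\<integral>x. \<bar>gs n x * (indicator (As n) x * h x) - g x * (indicator A x * h x)\<bar> \<partial>lborel)"
        by (rule integral_abs_bound)
      also have "\<dots> \<le> (\<integral>x. K * (\<bar>gs n x - g x\<bar> + g x * \<bar>indicator (As n) x - indicator A x\<bar>) \<partial>lborel)"
      proof (rule integral_mono)
        show "integrable lborel (\<lambda>x. \<bar>gs n x * (indicator (As n) x * h x) - g x * (indicator A x * h x)\<bar>)"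
          using i1 i2 by (intro integrable_abs Bochner_Integration.integrable_diff)
        show "integrable lborel (\<lambda>x. K * (\<bar>gs n x - g x\<bar> + g x * \<bar>indicator (As n) x - indicator A x\<bar>))"
          using intg intd by (intro integrable_mult_right Bochner_Integration.integrable_add)
        fix x
        let ?a = "indicator (As n) x :: real" and ?b = "indicator A x :: real"
        have "gs n x * (?a * h x) - g x * (?b * h x) = h x * ((gs n x - g x) * ?a + g x * (?a - ?b))"
          by (simp add: algebra_simps)
        also have "\<bar>\<dots>\<bar> \<le> K * (\<bar>gs n x - g x\<bar> + g x * \<bar>?a - ?b\<bar>)"
        proof -
          have "\<bar>(gs n x - g x) * ?a + g x * (?a - ?b)\<bar> \<le> \<bar>gs n x - g x\<bar> + g x * \<bar>?a - ?b\<bar>"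
            using gn[of x] by (auto simp: indicator_def)
          then show ?thesis unfolding abs_mult using hb[of x] by (intro mult_mono) auto
        qed
        finally show "\<bar>gs n x * (?a * h x) - g x * (?b * h x)\<bar> \<le> K * (\<bar>gs n x - g x\<bar> + g x * \<bar>?a - ?b\<bar>)" .
      qed
      also have "\<dots> = K * ((\<integral>x. \<bar>gs n x - g x\<bar> \<partial>lborel) + (\<integral>x. g x * \<bar>indicator (As n) x - indicator A x\<bar> \<partial>lborel))"
        using intg[of n] intd[of n] by simp
      finally show "norm ((\<integral>x. gs n x * (indicator (As n) x * h x) \<partial>lborel) - (\<integral>x. g x * (indicator A x * h x) \<partial>lborel))
       \<le> K * ((\<integral>x. \<bar>gs n x - g x\<bar> \<partial>lborel) + (\<integral>x. g x * \<bar>indicator (As n) x - indicator A x\<bar> \<partial>lborel))" .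
    qed
    have "(\<lambda>n. K * ((\<integral>x. \<bar>gs n x - g x\<bar> \<partial>lborel) + (\<integral>x. g x * \<bar>indicator (As n) x - indicator A x\<bar> \<partial>lborel))) \<longlonglongrightarrow> K * (0 + 0)"
      by (intro tendsto_intros S W)
    then show "(\<lambda>n. K * ((\<integral>x. \<bar>gs n x - g x\<bar> \<partial>lborel) + (\<integral>x. g x * \<bar>indicator (As n) x - indicator A x\<bar> \<partial>lborel))) \<longlonglongrightarrow> 0"
      by simp
  qed
  then show ?thesis by (simp add: Lim_null[symmetric])
qed




lemma phi_total:
  fixes F :: "'a::euclidean_space \<Rightarrow> 'w \<Rightarrow> 'a" and W :: "'w measure" and \<phi> :: "'a \<Rightarrow> 'a \<Rightarrow> real"
  assumes W: "prob_space W"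
    and F_meas: "(\<lambda>(x, w). F x w) \<in> borel_measurable (borel \<Otimes>\<^sub>M W)"
    and F_law: "\<And>x. distr W borel (F x) = density lborel (\<lambda>z. ennreal (\<phi> x z))"
    and phi_lip: "\<And>x. C1-lipschitz_on UNIV (\<phi> x)"
  shows "F x \<in> borel_measurable W" "(\<integral>\<^sup>+z. ennreal (\<phi> x z) \<partial>lborel) = 1"
proof -
  show Fm: "F x \<in> borel_measurable W"
    using measurable_Pair2[OF F_meas, of x] by simp
  have "prob_space (distr W borel (F x))"
    by (rule prob_space.prob_space_distr[OF W Fm])
  then have e1: "emeasure (distr W borel (F x)) UNIV = 1"
    using prob_space.emeasure_space_1 by fastforce
  show "(\<integral>\<^sup>+z. ennreal (\<phi> x z) \<partial>lborel) = 1"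
  proof -
    have "\<phi> x \<in> borel_measurable borel"
      using lipschitz_on_continuous_on[OF phi_lip] borel_measurable_continuous_onI by auto
    then have "emeasure (density lborel (\<lambda>z. ennreal (\<phi> x z))) UNIV = (\<integral>\<^sup>+z. ennreal (\<phi> x z) * indicator UNIV z \<partial>lborel)"
      by (intro emeasure_density) auto
    then show ?thesis using e1 unfolding F_law by simp
  qed
qed

lemma lim_r: "(\<lambda>k. 1 / (real k + 1)) \<longlonglongrightarrow> 0"
  using LIMSEQ_inverse_real_of_nat by (simp add: inverse_eq_divide add.commute)

lemma phi_meas:
  fixes F :: "'a::euclidean_space \<Rightarrow> 'w \<Rightarrow> 'a" and W :: "'w measure" and \<phi> :: "'a \<Rightarrow> 'a \<Rightarrow> real"
  assumes W: "prob_space W"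
    and F_meas: "(\<lambda>(x, w). F x w) \<in> borel_measurable (borel \<Otimes>\<^sub>M W)"
    and F_law: "\<And>x. distr W borel (F x) = density lborel (\<lambda>z. ennreal (\<phi> x z))"
    and phi_pos: "\<And>x z. \<phi> x z > 0"
    and phi_bdd: "\<And>x z. \<phi> x z \<le> C"
    and phi_lip: "\<And>x. C1-lipschitz_on UNIV (\<phi> x)"
  shows "(\<lambda>(x, z). \<phi> x z) \<in> borel_measurable (borel \<Otimes>\<^sub>M borel)"
proof -
  interpret W: prob_space W by (rule W)
  define r where "r k = 1 / (real k + 1)" for k :: nat
  have r: "r k > 0" for k by (simp add: r_def)
  define J where "J k xz = (\<integral>w. bump (snd xz) (r k) (F (fst xz) w) \<partial>W)" for k xz
  define I where "I k xz = (\<integral>y. bump (snd xz) (r k) y \<partial>lborel)" for k and xz :: "'a \<times> 'a"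
  have Fm: "F x \<in> borel_measurable W" for x
    using measurable_Pair2[OF F_meas, of x] by simp
  have JI: "J k (x, z) = (\<integral>y. \<phi> x y * bump z (r k) y \<partial>lborel)" for k x z
  proof -
    have "J k (x, z) = (\<integral>y. bump z (r k) y \<partial>distr W borel (F x))"
      unfolding J_def by (simp add: integral_distr[OF Fm])
    also have "\<dots> = (\<integral>y. \<phi> x y * bump z (r k) y \<partial>lborel)"
      unfolding F_law
    proof (subst integral_density)
      show "\<phi> x \<in> borel_measurable lborel"
        using lipschitz_on_continuous_on[OF phi_lip] borel_measurable_continuous_onI by auto
    qed (use phi_pos in \<open>auto simp: less_imp_le\<close>)
    finally show ?thesis .
  qed
  have lim: "(\<lambda>k. J k (x, z) / I k (x, z)) \<longlonglongrightarrow> \<phi> x z" for x z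
  proof -
    have phim: "\<phi> x \<in> borel_measurable borel"
      using lipschitz_on_continuous_on[OF phi_lip] borel_measurable_continuous_onI by auto
    have b: "\<bar>J k (x, z) / I k (x, z) - \<phi> x z\<bar> \<le> C1 * r k" for k
    proof -
      have Ip: "I k (x, z) > 0" unfolding I_def using bump_int_pos[OF r] by simp
      have "\<bar>J k (x, z) - \<phi> x z * I k (x, z)\<bar> \<le> C1 * r k * I k (x, z)"
        unfolding JI I_def using bump_approx(2)[OF phim _ phi_lip r, where K=C and z=z] phi_pos phi_bdd
        by (simp add: abs_le_iff less_imp_le)
      then have "\<bar>J k (x, z) - \<phi> x z * I k (x, z)\<bar> / I k (x, z) \<le> C1 * r k"
        using Ip by (simp add: divide_le_eq)
      moreover have "\<bar>J k (x, z) - \<phi> x z * I k (x, z)\<bar> / I k (x, z) = \<bar>J k (x, z) / I k (x, z) - \<phi> x z\<bar>"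
      proof -
        have "(J k (x, z) - \<phi> x z * I k (x, z)) / I k (x, z) = J k (x, z) / I k (x, z) - \<phi> x z"
          using Ip by (simp add: field_simps)
        then show ?thesis using abs_div_pos[OF Ip, of "J k (x, z) - \<phi> x z * I k (x, z)"] by simp
      qed
      ultimately show ?thesis by simp
    qed
    have "(\<lambda>k. C1 * r k) \<longlonglongrightarrow> C1 * 0"
      unfolding r_def by (intro tendsto_intros lim_r)
    then have "(\<lambda>k. C1 * r k) \<longlonglongrightarrow> 0" by simp
    then have "(\<lambda>k. J k (x, z) / I k (x, z) - \<phi> x z) \<longlonglongrightarrow> 0"
      by (rule Lim_null_comparison[rotated]) (use b in simp)
    then show ?thesis by (simp add: Lim_null[symmetric])
  qed
  have Jm: "J k \<in> borel_measurable (borel \<Otimes>\<^sub>M borel)" for k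
  proof -
    have "(\<lambda>(xz, w). bump (snd xz) (r k) (F (fst xz) w)) \<in> borel_measurable ((borel \<Otimes>\<^sub>M borel) \<Otimes>\<^sub>M W)"
    proof -
      have m1: "(\<lambda>x. (fst (fst x), snd x)) \<in> measurable ((borel \<Otimes>\<^sub>M borel) \<Otimes>\<^sub>M W) (borel \<Otimes>\<^sub>M W)"
        by measurable
      have "(\<lambda>x. F (fst (fst x)) (snd x)) \<in> borel_measurable ((borel \<Otimes>\<^sub>M borel) \<Otimes>\<^sub>M W)"
        using measurable_comp[OF m1 F_meas] by (simp add: comp_def)
      then have "(\<lambda>(xz, w). F (fst xz) w) \<in> borel_measurable ((borel \<Otimes>\<^sub>M borel) \<Otimes>\<^sub>M W)"
        by (simp add: case_prod_beta')
      then show ?thesis unfolding bump_def by measurable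
    qed
    from W.borel_measurable_lebesgue_integral[OF this] show ?thesis unfolding J_def by simp
  qed
  have Im: "I k \<in> borel_measurable (borel \<Otimes>\<^sub>M borel)" for k
  proof -
    have "(\<lambda>(xz, y). bump (snd xz) (r k) y) \<in> borel_measurable ((borel \<Otimes>\<^sub>M borel) \<Otimes>\<^sub>M lborel)"
      unfolding bump_def by measurable
    from lborel.borel_measurable_lebesgue_integral[OF this] show ?thesis unfolding I_def by simp
  qed
  show ?thesis
    by (rule borel_measurable_LIMSEQ_real[where u="\<lambda>k xz. J k xz / I k xz"])
       (use lim Jm Im in auto)
qed




lemma belief_mass:
  fixes \<phi> :: "'a::euclidean_space \<Rightarrow> 'a \<Rightarrow> real" and g :: "'a \<Rightarrow> real"
  assumes phim[measurable]: "(\<lambda>(x, z). \<phi> x z) \<in> borel_measurable (borel \<Otimes>\<^sub>M borel)"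
    and phi_pos: "\<And>x z. \<phi> x z > 0" and phi_bdd: "\<And>x z. \<phi> x z \<le> C"
    and phi_one: "\<And>x. (\<integral>\<^sup>+z. ennreal (\<phi> x z) \<partial>lborel) = 1"
    and gm[measurable]: "g \<in> borel_measurable borel" and gn: "\<And>x. 0 \<le> g x" and gi: "integrable lborel g"
    and Bm[measurable]: "B \<in> sets borel"
  shows "(\<lambda>z. \<integral>x. g x * (indicator B x * \<phi> x z) \<partial>lborel) \<in> borel_measurable borel"
    and "\<And>z. 0 \<le> (\<integral>x. g x * (indicator B x * \<phi> x z) \<partial>lborel)"
    and "0 < (\<integral>x. g x * indicator B x \<partial>lborel) \<Longrightarrow>
         (\<integral>\<^sup>+z. ennreal (inverse (\<integral>x. g x * indicator B x \<partial>lborel) * (\<integral>x. g x * (indicator B x * \<phi> x z) \<partial>lborel)) \<partial>lborel) = 1"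
proof -
  have pm2: "(\<lambda>(z, x). g x * (indicator B x * \<phi> x z)) \<in> borel_measurable (borel \<Otimes>\<^sub>M lborel)"
    by measurable
  show km: "(\<lambda>z. \<integral>x. g x * (indicator B x * \<phi> x z) \<partial>lborel) \<in> borel_measurable borel"
    using lborel.borel_measurable_lebesgue_integral[OF pm2] by simp
  have C: "0 \<le> C" using phi_pos[of 0 0] phi_bdd[of 0 0] by linarith
  have ii: "integrable lborel (\<lambda>x. g x * (indicator B x * \<phi> x z))" for z
  proof (rule Bochner_Integration.integrable_bound[where f="\<lambda>x. C * g x"])
    show "AE x in lborel. norm (g x * (indicator B x * \<phi> x z)) \<le> norm (C * g x)"
    proof (intro AE_I2)
      fix x
      have "indicator B x * \<phi> x z \<le> C" "0 \<le> indicator B x * \<phi> x z"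
        using phi_pos[of x z] phi_bdd[of x z] C by (auto simp: indicator_def less_imp_le)
      then have h: "g x * (indicator B x * \<phi> x z) \<le> g x * C" "0 \<le> g x * (indicator B x * \<phi> x z)"
        using gn[of x] by (auto intro: mult_left_mono)
      have e2: "norm (C * g x) = g x * C" using C gn[of x] by (simp add: mult.commute)
      show "norm (g x * (indicator B x * \<phi> x z)) \<le> norm (C * g x)"
        unfolding e2 using h by (simp only: real_norm_def abs_of_nonneg)
    qed
  qed (use gi in simp_all)
  have nn: "0 \<le> g x * (indicator B x * \<phi> x z)" for x z
    using gn[of x] phi_pos[of x z] by (simp add: less_imp_le)
  show kn: "0 \<le> (\<integral>x. g x * (indicator B x * \<phi> x z) \<partial>lborel)" for z
    using nn by (intro integral_nonneg_AE AE_I2) auto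
  assume a: "0 < (\<integral>x. g x * indicator B x \<partial>lborel)"
  define a' where "a' = (\<integral>x. g x * indicator B x \<partial>lborel)"
  have ia: "integrable lborel (\<lambda>x. g x * indicator B x)"
    using integrable_mult_indicator[of B lborel g] gi by (simp add: mult.commute)
  have "(\<integral>\<^sup>+z. ennreal (inverse a' * (\<integral>x. g x * (indicator B x * \<phi> x z) \<partial>lborel)) \<partial>lborel)
      = (\<integral>\<^sup>+z. ennreal (inverse a') * ennreal (\<integral>x. g x * (indicator B x * \<phi> x z) \<partial>lborel) \<partial>lborel)"
    using a kn by (intro nn_integral_cong) (simp add: a'_def ennreal_mult)
  also have "\<dots> = ennreal (inverse a') * (\<integral>\<^sup>+z. ennreal (\<integral>x. g x * (indicator B x * \<phi> x z) \<partial>lborel) \<partial>lborel)"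
    using km by (intro nn_integral_cmult) simp
  also have "(\<integral>\<^sup>+z. ennreal (\<integral>x. g x * (indicator B x * \<phi> x z) \<partial>lborel) \<partial>lborel)
      = (\<integral>\<^sup>+z. (\<integral>\<^sup>+x. ennreal (g x * (indicator B x * \<phi> x z)) \<partial>lborel) \<partial>lborel)"
    using ii nn by (intro nn_integral_cong) (simp add: nn_integral_eq_integral)
  also have "\<dots> = (\<integral>\<^sup>+x. (\<integral>\<^sup>+z. ennreal (g x * (indicator B x * \<phi> x z)) \<partial>lborel) \<partial>lborel)"
    by (rule lborel_pair.Fubini') measurable
  also have "\<dots> = (\<integral>\<^sup>+x. ennreal (g x * indicator B x) \<partial>lborel)"
  proof (intro nn_integral_cong)
    fix x
    have "(\<integral>\<^sup>+z. ennreal (g x * (indicator B x * \<phi> x z)) \<partial>lborel)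
        = (\<integral>\<^sup>+z. ennreal (g x * indicator B x) * ennreal (\<phi> x z) \<partial>lborel)"
      using gn[of x] phi_pos by (intro nn_integral_cong) (simp add: ennreal_mult less_imp_le mult.assoc)
    also have "\<dots> = ennreal (g x * indicator B x) * (\<integral>\<^sup>+z. ennreal (\<phi> x z) \<partial>lborel)"
      by (intro nn_integral_cmult) measurable
    also have "\<dots> = ennreal (g x * indicator B x)" using phi_one by simp
    finally show "(\<integral>\<^sup>+z. ennreal (g x * (indicator B x * \<phi> x z)) \<partial>lborel) = ennreal (g x * indicator B x)" .
  qed
  also have "\<dots> = ennreal a'"
    unfolding a'_def using ia gn by (intro nn_integral_eq_integral) (auto simp: indicator_def)
  also have "ennreal (inverse a') * ennreal a' = 1"
    using a by (simp add: a'_def ennreal_mult[symmetric])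
  finally show "(\<integral>\<^sup>+z. ennreal (inverse (\<integral>x. g x * indicator B x \<partial>lborel) * (\<integral>x. g x * (indicator B x * \<phi> x z) \<partial>lborel)) \<partial>lborel) = 1"
    unfolding a'_def .
qed




lemma nn1:
  fixes d :: "'a::euclidean_space \<Rightarrow> real"
  assumes dm: "d \<in> borel_measurable borel" and dn: "\<And>x. 0 \<le> d x"
    and one: "(\<integral>\<^sup>+x. ennreal (d x) \<partial>lborel) = 1"
  shows "integrable lborel d" "integral\<^sup>L lborel d = 1"
proof -
  show i: "integrable lborel d"
    using dm dn one by (intro integrableI_nonneg) auto
  have "(\<integral>\<^sup>+x. ennreal (d x) \<partial>lborel) = ennreal (integral\<^sup>L lborel d)"
    using i dn by (intro nn_integral_eq_integral) auto
  then show "integral\<^sup>L lborel d = 1" using one by simp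
qed

lemma dens_prob:
  fixes d :: "'a::euclidean_space \<Rightarrow> real"
  assumes dm: "d \<in> borel_measurable borel" and dn: "\<And>x. 0 \<le> d x"
    and P: "prob_space (density lborel (\<lambda>x. ennreal (d x)))"
  shows "integrable lborel d" "integral\<^sup>L lborel d = 1"
proof -
  have "emeasure (density lborel (\<lambda>x. ennreal (d x))) UNIV = 1"
    using prob_space.emeasure_space_1[OF P] by simp
  moreover have "emeasure (density lborel (\<lambda>x. ennreal (d x))) UNIV = (\<integral>\<^sup>+x. ennreal (d x) * indicator UNIV x \<partial>lborel)"
    using dm by (intro emeasure_density) auto
  ultimately have "(\<integral>\<^sup>+x. ennreal (d x) \<partial>lborel) = 1" by simp
  then show "integrable lborel d" "integral\<^sup>L lborel d = 1" using nn1[OF dm dn] by auto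
qed

lemma meas_dens:
  fixes d :: "'a::euclidean_space \<Rightarrow> real"
  assumes dm: "d \<in> borel_measurable borel" and dn: "\<And>x. 0 \<le> d x" and di: "integrable lborel d"
    and B: "B \<in> sets borel"
  shows "measure (density lborel (\<lambda>x. ennreal (d x))) B = (\<integral>x. d x * indicator B x \<partial>lborel)"
proof -
  have ia: "integrable lborel (\<lambda>x. d x * indicator B x)"
    using integrable_mult_indicator[of B lborel d] di B by (simp add: mult.commute)
  have "emeasure (density lborel (\<lambda>x. ennreal (d x))) B = (\<integral>\<^sup>+x. ennreal (d x) * indicator B x \<partial>lborel)"
    using dm B by (intro emeasure_density) auto
  also have "\<dots> = (\<integral>\<^sup>+x. ennreal (d x * indicator B x) \<partial>lborel)"
    by (intro nn_integral_cong) (auto simp: indicator_def)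
  also have "\<dots> = ennreal (\<integral>x. d x * indicator B x \<partial>lborel)"
    using ia dn by (intro nn_integral_eq_integral) (auto simp: indicator_def)
  finally have e: "emeasure (density lborel (\<lambda>x. ennreal (d x))) B = ennreal (\<integral>x. d x * indicator B x \<partial>lborel)" .
  have "0 \<le> (\<integral>x. d x * indicator B x \<partial>lborel)"
    using dn by (intro integral_nonneg_AE AE_I2) (simp add: indicator_def)
  then show ?thesis unfolding measure_def e by simp
qed

lemma setint_dens:
  fixes d :: "'a::euclidean_space \<Rightarrow> real" and h :: "'a \<Rightarrow> real"
  assumes dm: "d \<in> borel_measurable borel" and dn: "\<And>x. 0 \<le> d x"
    and hm: "h \<in> borel_measurable borel" and B: "B \<in> sets borel"
  shows "(\<integral>x\<in>B. h x \<partial>density lborel (\<lambda>x. ennreal (d x))) = (\<integral>x. d x * (indicator B x * h x) \<partial>lborel)"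
  unfolding set_lebesgue_integral_def
  using dm dn hm B by (subst integral_density) auto

lemma weak_from_L1:
  fixes e :: "nat \<Rightarrow> 'a::euclidean_space \<Rightarrow> real"
  assumes em: "\<And>n. e n \<in> borel_measurable borel" and en: "\<And>n x. 0 \<le> e n x"
    and ei: "\<And>n. integrable lborel (e n)"
    and e0m: "e0 \<in> borel_measurable borel" and e0n: "\<And>x. 0 \<le> e0 x" and e0i: "integrable lborel e0"
    and L: "(\<lambda>n. \<integral>x. \<bar>e n x - e0 x\<bar> \<partial>lborel) \<longlonglongrightarrow> 0"
  shows "weak_conv_seq (\<lambda>n. density lborel (\<lambda>x. ennreal (e n x))) (density lborel (\<lambda>x. ennreal (e0 x)))"
  unfolding weak_conv_seq_def
proof (intro allI impI)
  fix u :: "'a \<Rightarrow> real" assume u: "continuous_on UNIV u \<and> bounded (range u)"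
  then obtain K where K: "\<And>x. \<bar>u x\<bar> \<le> K" unfolding bounded_real by auto
  have K0: "0 \<le> K" using K[of 0] by linarith
  have um: "u \<in> borel_measurable borel" using u borel_measurable_continuous_onI by blast
  have rw: "(\<integral>x. u x \<partial>density lborel (\<lambda>x. ennreal (d x))) = (\<integral>x. d x * u x \<partial>lborel)"
    if "d \<in> borel_measurable borel" "\<And>x. 0 \<le> d x" for d
    using that um by (subst integral_density) auto
  have iu: "integrable lborel (\<lambda>x. d x * u x)" if "integrable lborel d" "d \<in> borel_measurable borel" for d
  proof (rule Bochner_Integration.integrable_bound[where f="\<lambda>x. K * d x"])
    show "AE x in lborel. norm (d x * u x) \<le> norm (K * d x)"
    proof (intro AE_I2)
      fix x
      have "\<bar>d x\<bar> * \<bar>u x\<bar> \<le> \<bar>d x\<bar> * K" using K[of x] by (intro mult_left_mono) auto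
      then show "norm (d x * u x) \<le> norm (K * d x)" using K0 by (simp add: abs_mult mult.commute)
    qed
  qed (use that um in simp_all)
  have "(\<lambda>n. (\<integral>x. e n x * u x \<partial>lborel) - (\<integral>x. e0 x * u x \<partial>lborel)) \<longlonglongrightarrow> 0"
  proof (rule Lim_null_comparison)
    show "eventually (\<lambda>n. norm ((\<integral>x. e n x * u x \<partial>lborel) - (\<integral>x. e0 x * u x \<partial>lborel)) \<le> K * (\<integral>x. \<bar>e n x - e0 x\<bar> \<partial>lborel)) sequentially"
    proof (intro always_eventually allI)
      fix n
      have "norm ((\<integral>x. e n x * u x \<partial>lborel) - (\<integral>x. e0 x * u x \<partial>lborel)) = \<bar>\<integral>x. e n x * u x - e0 x * u x \<partial>lborel\<bar>"
        using iu[OF ei em] iu[OF e0i e0m] by simp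
      also have "\<dots> \<le> (\<integral>x. \<bar>e n x * u x - e0 x * u x\<bar> \<partial>lborel)" by (rule integral_abs_bound)
      also have "\<dots> \<le> (\<integral>x. K * \<bar>e n x - e0 x\<bar> \<partial>lborel)"
      proof (rule integral_mono)
        show "integrable lborel (\<lambda>x. \<bar>e n x * u x - e0 x * u x\<bar>)"
          using iu[OF ei em] iu[OF e0i e0m] by (intro integrable_abs Bochner_Integration.integrable_diff)
        show "integrable lborel (\<lambda>x. K * \<bar>e n x - e0 x\<bar>)"
          using ei e0i by (intro integrable_mult_right integrable_abs Bochner_Integration.integrable_diff)
        fix x
        have "\<bar>e n x * u x - e0 x * u x\<bar> = \<bar>e n x - e0 x\<bar> * \<bar>u x\<bar>"
          by (simp add: abs_mult[symmetric] left_diff_distrib)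
        also have "\<dots> \<le> \<bar>e n x - e0 x\<bar> * K" using K[of x] by (intro mult_left_mono) auto
        finally show "\<bar>e n x * u x - e0 x * u x\<bar> \<le> K * \<bar>e n x - e0 x\<bar>" by (simp add: mult.commute)
      qed
      also have "\<dots> = K * (\<integral>x. \<bar>e n x - e0 x\<bar> \<partial>lborel)" by simp
      finally show "norm ((\<integral>x. e n x * u x \<partial>lborel) - (\<integral>x. e0 x * u x \<partial>lborel)) \<le> K * (\<integral>x. \<bar>e n x - e0 x\<bar> \<partial>lborel)" .
    qed
    show "(\<lambda>n. K * (\<integral>x. \<bar>e n x - e0 x\<bar> \<partial>lborel)) \<longlonglongrightarrow> 0"
      using tendsto_mult_left[OF L, of K] by simp
  qed
  then have lim: "(\<lambda>n. \<integral>x. e n x * u x \<partial>lborel) \<longlonglongrightarrow> (\<integral>x. e0 x * u x \<partial>lborel)"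
    by (rule Lim_null[THEN iffD2])
  have eq1: "(\<integral>x. u x \<partial>density lborel (\<lambda>x. ennreal (e n x))) = (\<integral>x. e n x * u x \<partial>lborel)" for n
    using rw[OF em en] .
  have eq2: "(\<integral>x. u x \<partial>density lborel (\<lambda>x. ennreal (e0 x))) = (\<integral>x. e0 x * u x \<partial>lborel)"
    using rw[OF e0m e0n] .
  show "(\<lambda>n. \<integral>x. u x \<partial>density lborel (\<lambda>x. ennreal (e n x))) \<longlonglongrightarrow> (\<integral>x. u x \<partial>density lborel (\<lambda>x. ennreal (e0 x)))"
    unfolding eq1 eq2 by (rule lim)
qed

lemma G_cont:
  fixes u :: "'a::euclidean_space \<Rightarrow> real"
  assumes uc: "continuous_on UNIV u"
  shows "continuous_on UNIV (\<lambda>z::'a \<times> nat. u (fst z) * indicator {m} (snd z))"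
proof -
  have i: "continuous_on UNIV (indicator {m} :: nat \<Rightarrow> real)" by (rule Topological_Spaces.continuous_on_discrete)
  have s: "continuous_on UNIV (\<lambda>z::'a \<times> nat. snd z)" by (rule continuous_on_snd[OF continuous_on_id])
  have f: "continuous_on UNIV (\<lambda>z::'a \<times> nat. fst z)" by (rule continuous_on_fst[OF continuous_on_id])
  have c1: "continuous_on UNIV (\<lambda>z::'a \<times> nat. indicator {m} (snd z) :: real)"
    using continuous_on_compose2[OF i s] by blast
  have c2: "continuous_on UNIV (\<lambda>z::'a \<times> nat. u (fst z))"
    using continuous_on_compose2[OF uc f] by blast
  show ?thesis using c2 c1 by (rule continuous_on_mult)
qed

lemma joint_int:
  fixes p :: "'a::euclidean_space \<Rightarrow> real" and R :: "'a \<Rightarrow> nat" and u :: "'a \<Rightarrow> real"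
  assumes pm: "p \<in> borel_measurable borel" and pn: "\<And>x. 0 \<le> p x"
    and Rm: "R \<in> borel_measurable borel" and uc: "continuous_on UNIV u"
  shows "(\<integral>z. u (fst z) * indicator {m} (snd z) \<partial>joint_PQ (density lborel (\<lambda>x. ennreal (p x))) R)
       = (\<integral>x. p x * (indicator (R -` {m}) x * u x) \<partial>lborel)"
proof -
  have um: "u \<in> borel_measurable borel" using uc borel_measurable_continuous_onI by blast
  have m0: "(\<lambda>x. (x, R x)) \<in> measurable borel (borel \<Otimes>\<^sub>M (borel :: nat measure))"
    by (rule measurable_Pair[OF measurable_ident_sets[OF refl] Rm])
  have "measurable (density lborel (\<lambda>x. ennreal (p x))) (borel::('a \<times> nat) measure) = measurable borel borel"
    by (rule measurable_cong_sets) auto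
  then have m1: "(\<lambda>x. (x, R x)) \<in> measurable (density lborel (\<lambda>x. ennreal (p x))) (borel :: ('a \<times> nat) measure)"
    using m0 unfolding borel_prod by simp
  have Gm: "(\<lambda>z::'a \<times> nat. u (fst z) * indicator {m} (snd z)) \<in> borel_measurable borel"
    using G_cont[OF uc] borel_measurable_continuous_onI by blast
  have "(\<integral>z. u (fst z) * indicator {m} (snd z) \<partial>joint_PQ (density lborel (\<lambda>x. ennreal (p x))) R)
      = (\<integral>x. u x * indicator {m} (R x) \<partial>density lborel (\<lambda>x. ennreal (p x)))"
    unfolding joint_PQ_def by (simp add: integral_distr[OF m1 Gm])
  also have "\<dots> = (\<integral>x. p x * (u x * indicator {m} (R x)) \<partial>lborel)"
  proof -
    have "(\<lambda>x. u x * indicator {m} (R x)) \<in> borel_measurable lborel"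
      using Rm um by (intro borel_measurable_times) (auto intro: measurable_compose[OF Rm])
    then show ?thesis using pm pn by (subst integral_density) auto
  qed
  also have "\<dots> = (\<integral>x. p x * (indicator (R -` {m}) x * u x) \<partial>lborel)"
    by (intro Bochner_Integration.integral_cong) (auto simp: indicator_def)
  finally show ?thesis .
qed




lemma pb:
  fixes e :: "'a::euclidean_space \<Rightarrow> real"
  assumes em: "e \<in> borel_measurable borel" and one: "(\<integral>\<^sup>+x. ennreal (e x) \<partial>lborel) = 1"
  shows "prob_borel (density lborel (\<lambda>x. ennreal (e x)))"
  unfolding prob_borel_def
proof
  have "emeasure (density lborel (\<lambda>x. ennreal (e x))) UNIV = (\<integral>\<^sup>+x. ennreal (e x) * indicator UNIV x \<partial>lborel)"
    using em by (intro emeasure_density) auto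
  then show "prob_space (density lborel (\<lambda>x. ennreal (e x)))"
    using one by (intro prob_spaceI) simp
  show "sets (density lborel (\<lambda>x. ennreal (e x))) = sets borel" by simp
qed

lemma term_rewrite:
  fixes d :: "'a::euclidean_space \<Rightarrow> real" and R :: "'a \<Rightarrow> nat"
  assumes dm: "d \<in> borel_measurable borel" and dn: "\<And>x. 0 \<le> d x" and di: "integrable lborel d"
    and Rm: "R \<in> borel_measurable borel"
    and phim: "(\<lambda>(x, z). \<phi> x z) \<in> borel_measurable (borel \<Otimes>\<^sub>M borel)"
  shows "measure (density lborel (\<lambda>x. ennreal (d x))) (R -` {m}) = (\<integral>x. d x * indicator (R -` {m}) x \<partial>lborel)"
    and "belief_update \<phi> m (density lborel (\<lambda>x. ennreal (d x))) R =
         density lborel (\<lambda>z. ennreal (inverse (\<integral>x. d x * indicator (R -` {m}) x \<partial>lborel) *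
            (\<integral>x. d x * (indicator (R -` {m}) x * \<phi> x z) \<partial>lborel)))"
proof -
  have B: "R -` {m} \<in> sets borel" using borel_measurable_vimage[OF Rm, of m] by simp
  show me: "measure (density lborel (\<lambda>x. ennreal (d x))) (R -` {m}) = (\<integral>x. d x * indicator (R -` {m}) x \<partial>lborel)"
    by (rule meas_dens[OF dm dn di B])
  have hm: "(\<lambda>x. \<phi> x z) \<in> borel_measurable borel" for z
    using measurable_Pair1[OF phim, of z] by simp
  show "belief_update \<phi> m (density lborel (\<lambda>x. ennreal (d x))) R =
         density lborel (\<lambda>z. ennreal (inverse (\<integral>x. d x * indicator (R -` {m}) x \<partial>lborel) *
            (\<integral>x. d x * (indicator (R -` {m}) x * \<phi> x z) \<partial>lborel)))"
    unfolding belief_update_def me using setint_dens[OF dm dn hm B] by simp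
qed

lemma term_conv:
  fixes a :: "nat \<Rightarrow> real" and k :: "nat \<Rightarrow> 'a::euclidean_space \<Rightarrow> real"
    and f :: "'a measure \<Rightarrow> real"
  assumes alim: "a \<longlonglongrightarrow> a0" and an: "\<And>n. 0 \<le> a n" and a0n: "0 \<le> a0"
    and klim: "\<And>z. (\<lambda>n. k n z) \<longlonglongrightarrow> k0 z"
    and km: "\<And>n. k n \<in> borel_measurable borel" and k0m: "k0 \<in> borel_measurable borel"
    and kn: "\<And>n z. 0 \<le> k n z" and k0n: "\<And>z. 0 \<le> k0 z"
    and mass: "\<And>n. 0 < a n \<Longrightarrow> (\<integral>\<^sup>+z. ennreal (inverse (a n) * k n z) \<partial>lborel) = 1"
    and mass0: "0 < a0 \<Longrightarrow> (\<integral>\<^sup>+z. ennreal (inverse a0 * k0 z) \<partial>lborel) = 1"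
    and f_bdd: "\<exists>B. \<forall>\<mu>. prob_borel \<mu> \<longrightarrow> \<bar>f \<mu>\<bar> \<le> B"
    and f_cont: "\<And>\<mu>s \<mu>. (\<forall>n. prob_borel (\<mu>s n)) \<Longrightarrow> prob_borel \<mu> \<Longrightarrow>
                   weak_conv_seq \<mu>s \<mu> \<Longrightarrow> (\<lambda>n. f (\<mu>s n)) \<longlonglongrightarrow> f \<mu>"
  shows "(\<lambda>n. if a n = 0 then 0 else f (density lborel (\<lambda>z. ennreal (inverse (a n) * k n z))) * a n)
     \<longlonglongrightarrow> (if a0 = 0 then 0 else f (density lborel (\<lambda>z. ennreal (inverse a0 * k0 z))) * a0)"
proof (cases "a0 = 0")
  case True
  obtain B where B: "\<And>\<mu>. prob_borel \<mu> \<Longrightarrow> \<bar>f \<mu>\<bar> \<le> B" using f_bdd by blast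
  have "(\<lambda>n. if a n = 0 then 0 else f (density lborel (\<lambda>z. ennreal (inverse (a n) * k n z))) * a n) \<longlonglongrightarrow> 0"
  proof (rule Lim_null_comparison)
    show "eventually (\<lambda>n. norm (if a n = 0 then 0 else f (density lborel (\<lambda>z. ennreal (inverse (a n) * k n z))) * a n) \<le> \<bar>B\<bar> * a n) sequentially"
    proof (intro always_eventually allI)
      fix n
      show "norm (if a n = 0 then 0 else f (density lborel (\<lambda>z. ennreal (inverse (a n) * k n z))) * a n) \<le> \<bar>B\<bar> * a n"
      proof (cases "a n = 0")
        case True then show ?thesis by simp
      next
        case False
        then have ap: "0 < a n" using an[of n] by linarith
        have "prob_borel (density lborel (\<lambda>z. ennreal (inverse (a n) * k n z)))"
          using mass[OF ap] km[of n] by (intro pb) auto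
        then have "\<bar>f (density lborel (\<lambda>z. ennreal (inverse (a n) * k n z)))\<bar> \<le> \<bar>B\<bar>" using B by force
        then show ?thesis using False ap by (simp add: abs_mult mult_right_mono)
      qed
    qed
    show "(\<lambda>n. \<bar>B\<bar> * a n) \<longlonglongrightarrow> 0" using tendsto_mult_left[OF alim, of "\<bar>B\<bar>"] True by simp
  qed
  then show ?thesis using True by simp
next
  case False
  then have a0p: "0 < a0" using a0n by linarith
  have ev: "eventually (\<lambda>n. 0 < a n) sequentially"
    using order_tendstoD(1)[OF alim a0p] .
  define e where "e n z = (if 0 < a n then inverse (a n) * k n z else inverse a0 * k0 z)" for n z
  define e0 where "e0 z = inverse a0 * k0 z" for z
  have em: "e n \<in> borel_measurable borel" for n unfolding e_def using km k0m by simp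
  have e0m: "e0 \<in> borel_measurable borel" unfolding e0_def using k0m by simp
  have en: "0 \<le> e n z" for n z unfolding e_def using kn k0n an a0n by simp
  have e0n: "0 \<le> e0 z" for z unfolding e0_def using k0n a0n by simp
  have emass: "(\<integral>\<^sup>+z. ennreal (e n z) \<partial>lborel) = 1" for n
    unfolding e_def using mass mass0[OF a0p] by (cases "0 < a n") auto
  have e0mass: "(\<integral>\<^sup>+z. ennreal (e0 z) \<partial>lborel) = 1" unfolding e0_def using mass0[OF a0p] by simp
  have elim: "(\<lambda>n. e n z) \<longlonglongrightarrow> e0 z" for z
  proof -
    have "(\<lambda>n. inverse (a n) * k n z) \<longlonglongrightarrow> inverse a0 * k0 z"
      using False by (intro tendsto_intros alim klim)
    moreover have "eventually (\<lambda>n. inverse (a n) * k n z = e n z) sequentially"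
      using ev by eventually_elim (simp add: e_def)
    ultimately show ?thesis unfolding e0_def by (rule Lim_transform_eventually)
  qed
  have L: "(\<lambda>n. \<integral>z. \<bar>e n z - e0 z\<bar> \<partial>lborel) \<longlonglongrightarrow> 0"
    by (rule scheffe[where M=lborel])
       (use em e0m en e0n nn1[OF em en emass] nn1[OF e0m e0n e0mass] elim in auto)
  have wc: "weak_conv_seq (\<lambda>n. density lborel (\<lambda>x. ennreal (e n x))) (density lborel (\<lambda>x. ennreal (e0 x)))"
    by (rule weak_from_L1[OF em en nn1(1)[OF em en emass] e0m e0n nn1(1)[OF e0m e0n e0mass] L])
  have flim: "(\<lambda>n. f (density lborel (\<lambda>x. ennreal (e n x)))) \<longlonglongrightarrow> f (density lborel (\<lambda>x. ennreal (e0 x)))"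
    by (rule f_cont[OF _ pb[OF e0m e0mass] wc]) (use pb[OF em emass] in blast)
  have "(\<lambda>n. f (density lborel (\<lambda>x. ennreal (e n x))) * a n) \<longlonglongrightarrow> f (density lborel (\<lambda>x. ennreal (e0 x))) * a0"
    by (intro tendsto_mult flim alim)
  moreover have "eventually (\<lambda>n. f (density lborel (\<lambda>x. ennreal (e n x))) * a n =
      (if a n = 0 then 0 else f (density lborel (\<lambda>z. ennreal (inverse (a n) * k n z))) * a n)) sequentially"
    using ev by eventually_elim (simp add: e_def)
  ultimately show ?thesis using False unfolding e0_def by (auto elim: Lim_transform_eventually)
qed




theorem lemma11:
  fixes F :: "'a::euclidean_space \<Rightarrow> 'w \<Rightarrow> 'a"
    and W :: "'w measure"
    and \<phi> :: "'a \<Rightarrow> 'a \<Rightarrow> real"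
    and C C1 :: real
    and M :: nat
    and p :: "'a \<Rightarrow> real"
    and f :: "'a measure \<Rightarrow> real"
    and \<pi>s :: "nat \<Rightarrow> 'a measure" and \<pi> :: "'a measure"
    and Qs :: "nat \<Rightarrow> 'a \<Rightarrow> nat" and Q :: "'a \<Rightarrow> nat"
  assumes W: "prob_space W"
    and F_meas: "(\<lambda>(x, w). F x w) \<in> borel_measurable (borel \<Otimes>\<^sub>M W)"
    and F_law: "\<And>x. distr W borel (F x) = density lborel (\<lambda>z. ennreal (\<phi> x z))"
    and phi_pos: "\<And>x z. \<phi> x z > 0"
    and phi_bdd: "\<And>x z. \<phi> x z \<le> C"
    and phi_lip: "\<And>x. C1-lipschitz_on UNIV (\<phi> x)"
    and M_pos: "M \<ge> 1"
    and p_meas: "p \<in> borel_measurable borel"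
    and p_pos: "\<And>x. p x > 0"
    and P_prob: "prob_space (density lborel (\<lambda>x. ennreal (p x)))"
    and f_bdd: "\<exists>B. \<forall>\<mu>. prob_borel \<mu> \<longrightarrow> \<bar>f \<mu>\<bar> \<le> B"
    and f_cont: "\<And>\<mu>s \<mu>. (\<forall>n. prob_borel (\<mu>s n)) \<Longrightarrow> prob_borel \<mu> \<Longrightarrow>
                   weak_conv_seq \<mu>s \<mu> \<Longrightarrow> (\<lambda>n. f (\<mu>s n)) \<longlonglongrightarrow> f \<mu>"
    and \<pi>s_S: "\<And>n. in_S C C1 (\<pi>s n)" and \<pi>_S: "in_S C C1 \<pi>"
    and Qs_Qc: "\<And>n. in_Qc M (Qs n)" and Q_Qc: "in_Qc M Q"
    and \<pi>_conv: "weak_conv_seq \<pi>s \<pi>"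
    and Q_conv: "weak_conv_seq (\<lambda>n. joint_PQ (density lborel (\<lambda>x. ennreal (p x))) (Qs n))
                              (joint_PQ (density lborel (\<lambda>x. ennreal (p x))) Q)"
  shows "(\<lambda>n. Pf f \<phi> M (\<pi>s n) (Qs n)) \<longlonglongrightarrow> Pf f \<phi> M \<pi> Q"
proof -
  have pm: "p \<in> borel_measurable borel" by (rule p_meas)
  have pn: "\<And>x. 0 \<le> p x" using p_pos less_imp_le by blast
  have pint: "integrable lborel p" by (rule dens_prob(1)[OF pm pn P_prob])
  obtain g where gm: "g \<in> borel_measurable borel" and gb': "\<forall>x. 0 \<le> g x \<and> g x \<le> C"
      and gl: "C1-lipschitz_on UNIV g" and \<pi>eq: "\<pi> = density lborel (\<lambda>x. ennreal (g x))"
      and \<pi>P: "prob_space \<pi>"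
    using \<pi>_S unfolding in_S_def by blast
  have gb: "\<And>x. 0 \<le> g x \<and> g x \<le> C" using gb' by blast
  have gn: "\<And>x. 0 \<le> g x" using gb by blast
  have "\<forall>n. \<exists>h. h \<in> borel_measurable borel \<and> (\<forall>x. 0 \<le> h x \<and> h x \<le> C) \<and>
          C1-lipschitz_on UNIV h \<and> \<pi>s n = density lborel (\<lambda>x. ennreal (h x))"
    using \<pi>s_S unfolding in_S_def by blast
  then obtain gs where gs: "\<And>n. gs n \<in> borel_measurable borel \<and> (\<forall>x. 0 \<le> gs n x \<and> gs n x \<le> C) \<and>
          C1-lipschitz_on UNIV (gs n) \<and> \<pi>s n = density lborel (\<lambda>x. ennreal (gs n x))"
    by metis
  have gsm: "\<And>n. gs n \<in> borel_measurable borel" using gs by blast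
  have gsb: "\<And>n x. 0 \<le> gs n x \<and> gs n x \<le> C" using gs by blast
  have gsn: "\<And>n x. 0 \<le> gs n x" using gsb by blast
  have gsl: "\<And>n. C1-lipschitz_on UNIV (gs n)" using gs by blast
  have \<pi>seq: "\<And>n. \<pi>s n = density lborel (\<lambda>x. ennreal (gs n x))" using gs by blast
  have \<pi>sP: "\<And>n. prob_space (\<pi>s n)" using \<pi>s_S unfolding in_S_def by blast
  have gsi: "\<And>n. integrable lborel (gs n)" and gs1: "\<And>n. integral\<^sup>L lborel (gs n) = 1"
    using dens_prob[OF gsm gsn] \<pi>sP \<pi>seq by metis+
  have gi: "integrable lborel g" and g1: "integral\<^sup>L lborel g = 1"
    using dens_prob[OF gm gn] \<pi>P \<pi>eq by metis+
  have \<pi>s_fun: "\<pi>s = (\<lambda>n. density lborel (\<lambda>x. ennreal (gs n x)))" by (rule ext) (rule \<pi>seq)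
  have glim: "(\<lambda>n. gs n z) \<longlonglongrightarrow> g z" for z
    by (rule dens_pointwise[OF gsm gsb gsl gm gb gl]) (use \<pi>_conv \<pi>s_fun \<pi>eq in simp)
  have S: "(\<lambda>n. \<integral>x. \<bar>gs n x - g x\<bar> \<partial>lborel) \<longlonglongrightarrow> 0"
    by (rule scheffe[where M=lborel]) (use gsm gm gsn gn gsi gi gs1 g1 glim in auto)
  have phim: "(\<lambda>(x, z). \<phi> x z) \<in> borel_measurable (borel \<Otimes>\<^sub>M borel)"
    by (rule phi_meas[OF W F_meas F_law phi_pos phi_bdd phi_lip])
  have phi1: "\<And>x. (\<integral>\<^sup>+z. ennreal (\<phi> x z) \<partial>lborel) = 1"
    by (rule phi_total(2)[OF W F_meas F_law phi_lip])
  have Qsm: "\<And>n. Qs n \<in> borel_measurable borel" using Qs_Qc unfolding in_Qc_def by blast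
  have Qm: "Q \<in> borel_measurable borel" using Q_Qc unfolding in_Qc_def by blast
  have Qcv: "\<And>i. convex (Q -` {i})" using Q_Qc unfolding in_Qc_def by blast
  show ?thesis
    unfolding Pf_def
  proof (rule tendsto_sum)
    fix m assume "m \<in> {1..M}"
    define As where "As n = Qs n -` {m}" for n
    define A where "A = Q -` {m}"
    have Asm: "As n \<in> sets borel" for n using borel_measurable_vimage[OF Qsm, of n m] by (simp add: As_def)
    have Am: "A \<in> sets borel" using borel_measurable_vimage[OF Qm, of m] by (simp add: A_def)
    have Acv: "convex A" unfolding A_def by (rule Qcv)
    have conv: "(\<lambda>n. \<integral>x. p x * (indicator (As n) x * u x) \<partial>lborel) \<longlonglongrightarrow> (\<integral>x. p x * (indicator A x * u x) \<partial>lborel)"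
      if uc: "continuous_on UNIV u" and ub: "\<And>x. \<bar>u x\<bar> \<le> 1" for u
    proof -
      have "bounded (range (\<lambda>z::'a \<times> nat. u (fst z) * indicator {m} (snd z)))"
        unfolding bounded_real
      proof (intro exI ballI)
        fix y assume "y \<in> range (\<lambda>z::'a \<times> nat. u (fst z) * indicator {m} (snd z))"
        then obtain z :: "'a \<times> nat" where "y = u (fst z) * indicator {m} (snd z)" by blast
        then show "\<bar>y\<bar> \<le> 1" using ub[of "fst z"] by (auto simp: indicator_def abs_mult)
      qed
      then have "(\<lambda>n. \<integral>z. u (fst z) * indicator {m} (snd z) \<partial>joint_PQ (density lborel (\<lambda>x. ennreal (p x))) (Qs n))
           \<longlonglongrightarrow> (\<integral>z. u (fst z) * indicator {m} (snd z) \<partial>joint_PQ (density lborel (\<lambda>x. ennreal (p x))) Q)"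
        using Q_conv G_cont[OF uc, of m] unfolding weak_conv_seq_def by blast
      then show ?thesis
        unfolding joint_int[OF pm pn Qsm uc] joint_int[OF pm pn Qm uc] As_def A_def .
    qed
    have E: "(\<lambda>n. \<integral>x. p x * \<bar>indicator (As n) x - indicator A x\<bar> \<partial>lborel) \<longlonglongrightarrow> 0"
      by (rule cell_conv[OF pm pn pint Asm Am Acv conv])
    have Wc: "(\<lambda>n. \<integral>x. g x * \<bar>indicator (As n) x - indicator A x\<bar> \<partial>lborel) \<longlonglongrightarrow> 0"
      by (rule cell_conv_g[OF pm p_pos pint gm gb gi Asm Am E])
    define a where "a n = (\<integral>x. gs n x * indicator (As n) x \<partial>lborel)" for n
    define a0 where "a0 = (\<integral>x. g x * indicator A x \<partial>lborel)"
    define k where "k n z = (\<integral>x. gs n x * (indicator (As n) x * \<phi> x z) \<partial>lborel)" for n z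
    define k0 where "k0 z = (\<integral>x. g x * (indicator A x * \<phi> x z) \<partial>lborel)" for z
    have alim: "a \<longlonglongrightarrow> a0"
      using core[OF gsm gm gsi gi gn S Wc _ _ Asm Am, of "\<lambda>_. 1" 1] unfolding a_def a0_def by simp
    have hm: "(\<lambda>x. \<phi> x z) \<in> borel_measurable borel" for z
      using measurable_Pair1[OF phim, of z] by simp
    have hb: "\<bar>\<phi> x z\<bar> \<le> C" for x z using phi_pos[of x z] phi_bdd[of x z] by simp
    have klim: "(\<lambda>n. k n z) \<longlonglongrightarrow> k0 z" for z
      unfolding k_def k0_def by (rule core[OF gsm gm gsi gi gn S Wc hm hb Asm Am])
    note bm = belief_mass[OF phim phi_pos phi_bdd phi1]
    have km: "k n \<in> borel_measurable borel" for n unfolding k_def by (rule bm(1)[OF gsm gsn gsi Asm])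
    have k0m: "k0 \<in> borel_measurable borel" unfolding k0_def by (rule bm(1)[OF gm gn gi Am])
    have kn: "0 \<le> k n z" for n z unfolding k_def by (rule bm(2)[OF gsm gsn gsi Asm])
    have k0n: "0 \<le> k0 z" for z unfolding k0_def by (rule bm(2)[OF gm gn gi Am])
    have mass: "(\<integral>\<^sup>+z. ennreal (inverse (a n) * k n z) \<partial>lborel) = 1" if "0 < a n" for n
      using bm(3)[OF gsm gsn gsi Asm] that unfolding a_def k_def by blast
    have mass0: "(\<integral>\<^sup>+z. ennreal (inverse a0 * k0 z) \<partial>lborel) = 1" if "0 < a0"
      using bm(3)[OF gm gn gi Am] that unfolding a0_def k0_def by blast
    have an: "0 \<le> a n" for n unfolding a_def using gsn by (intro integral_nonneg_AE AE_I2) simp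
    have a0n: "0 \<le> a0" unfolding a0_def using gn by (intro integral_nonneg_AE AE_I2) simp
    have T: "(\<lambda>n. if a n = 0 then 0 else f (density lborel (\<lambda>z. ennreal (inverse (a n) * k n z))) * a n)
        \<longlonglongrightarrow> (if a0 = 0 then 0 else f (density lborel (\<lambda>z. ennreal (inverse a0 * k0 z))) * a0)"
      by (rule term_conv[OF alim an a0n klim km k0m kn k0n mass mass0 f_bdd f_cont])
    have e1: "measure (\<pi>s n) (Qs n -` {m}) = a n" for n
      unfolding \<pi>seq a_def As_def by (rule term_rewrite(1)[OF gsm gsn gsi Qsm phim])
    have e2: "belief_update \<phi> m (\<pi>s n) (Qs n) = density lborel (\<lambda>z. ennreal (inverse (a n) * k n z))" for n
      unfolding \<pi>seq a_def k_def As_def by (rule term_rewrite(2)[OF gsm gsn gsi Qsm phim])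
    have e3: "measure \<pi> (Q -` {m}) = a0"
      unfolding \<pi>eq a0_def A_def by (rule term_rewrite(1)[OF gm gn gi Qm phim])
    have e4: "belief_update \<phi> m \<pi> Q = density lborel (\<lambda>z. ennreal (inverse a0 * k0 z))"
      unfolding \<pi>eq a0_def k0_def A_def by (rule term_rewrite(2)[OF gm gn gi Qm phim])
    show "(\<lambda>n. if measure (\<pi>s n) (Qs n -` {m}) = 0 then 0
              else f (belief_update \<phi> m (\<pi>s n) (Qs n)) * measure (\<pi>s n) (Qs n -` {m}))
        \<longlonglongrightarrow> (if measure \<pi> (Q -` {m}) = 0 then 0
              else f (belief_update \<phi> m \<pi> Q) * measure \<pi> (Q -` {m}))"
      unfolding e1 e2 e3 e4 by (rule T)
  qed
qed


end
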